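(* Given any three spin-decorated horospheres $(\mathfrak{h}_n,W_n)$ in $\mathcal{H}^4$, $n=1,2,3$, let $\lambda_{mn}$ denote the lambda length from $(\mathfrak{h}_m,W_m)$ to $(\mathfrak{h}_n,W_n)$. Then $\lambda_{12}\lambda_{32}^{-1}\lambda_{31}\in\mathcal{V}\cup\{\infty\}$, where $\mathcal{V}=\mathrm{span}_\mathbb{R}\{1,i,j\}\subset\mathbb{H}$.
   Context: $\mathcal{H}^4$ is oriented hyperbolic 4-space (in the upper half-space model $(\partial_w,\partial_x,\partial_y,\partial_z)$ is positive). A horosphere is $\{x\in\mathcal{H}^4:\langle x,p\rangle=1\}$ in the hyperboloid model, $p$ future lightlike. A decoration on a horosphere is a pair of perpendicular, parallel, oriented tangent line fields with unit fields $v^i,v^j$; with inward normal $N^{in}$ (away from the centre) and outward normal $N^{out}=-N^{in}$ the inward/outward frame fields are the oriented orthonormal frames $(v^{1,in},v^i,v^j,N^{in})$, $(v^{1,out},v^i,v^j,N^{out})$. A spin decoration is a pair $(W^{in},W^{out})$ of continuous lifts of these to the spin double cover of the frame bundle, $W^{in}$ being obtained from $W^{out}$ by rotation through $\pi$ in the plane orthogonal to $v^i,v^j$ from $N^{out}$ towards $v^{1,out}$. Lambda length from $(\mathfrak{h}_1,W_1)$ to $(\mathfrak{h}_2,W_2)$: $0$ if the centres coincide; otherwise with $\gamma$ the oriented geodesic from the centre of $\mathfrak{h}_1$ to that of $\mathfrak{h}_2$ and $p_m=\gamma\cap\mathfrak{h}_m$, translate $W_1^{in}(p_1)$ along $\gamma$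 by signed distance $\rho$ and then rotate by $\theta\in\mathbb{R}/4\pi\mathbb{Z}$ in the 3-plane orthogonal to $\gamma$ at $p_2$ (oriented so that a basis followed by the tangent of $\gamma$ is positive; right-handed angle) about the axis directed by a unit vector whose coordinates $v\in\mathcal{V}$ are taken w.r.t. the first three frame vectors identified with $1,i,j$, to reach $W_2^{out}(p_2)$; then $\lambda_{12}=\exp((\rho+\theta vk)/2)$. *)

theory Defs
  imports "HOL-Analysis.Analysis"
begin

datatype quat = Quat (qre: real) (qi: real) (qj: real) (qk: real)

definition qmul :: "quat \<Rightarrow> quat \<Rightarrow> quat" where
  "qmul p q = Quat
     (qre p * qre q - qi p * qi q - qj p * qj q - qk p * qk q)
     (qre p * qi q + qi p * qre q + qj p * qk q - qk p * qj q)
     (qre p * qj q - qi p * qk q + qj p * qre q + qk p * qi q)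
     (qre p * qk q + qi p * qj q - qj p * qi q + qk p * qre q)"

definition qnorm2 :: "quat \<Rightarrow> real" where
  "qnorm2 q = qre q ^ 2 + qi q ^ 2 + qj q ^ 2 + qk q ^ 2"

definition qinv :: "quat \<Rightarrow> quat" where
  "qinv q = Quat (qre q / qnorm2 q) (- qi q / qnorm2 q) (- qj q / qnorm2 q) (- qk q / qnorm2 q)"

definition qadd :: "quat \<Rightarrow> quat \<Rightarrow> quat" where
  "qadd p q = Quat (qre p + qre q) (qi p + qi q) (qj p + qj q) (qk p + qk q)"

definition qzero :: quat where "qzero = Quat 0 0 0 0"

definition qexp :: "quat \<Rightarrow> quat" where
  "qexp q = (let r = sqrt (qi q ^ 2 + qj q ^ 2 + qk q ^ 2); e = exp (qre q);
               s = (if r = 0 then 1 else sin r / r)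
             in Quat (e * cos r) (e * s * qi q) (e * s * qj q) (e * s * qk q))"

text \<open>\<open>\<V>\<close> = span of 1, i, j.\<close>
definition qV :: "quat set" where "qV = {q. qk q = 0}"

type_synonym R5 = "real^5"
type_synonym frame = "real^5^5"  \<comment> \<open>row 0 = base point, rows 1..4 = frame vectors\<close>

definition mink :: "R5 \<Rightarrow> R5 \<Rightarrow> real" where
  "mink x y = x$0 * y$0 - x$1 * y$1 - x$2 * y$2 - x$3 * y$3 - x$4 * y$4"

definition hyp4 :: "R5 set" where
  "hyp4 = {x. mink x x = 1 \<and> x$0 > 0}"

definition future_lightlike :: "R5 \<Rightarrow> bool" where
  "future_lightlike p \<longleftrightarrow> mink p p = 0 \<and> p$0 > 0"

definition horo :: "R5 \<Rightarrow> R5 set" where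
  "horo p = {x \<in> hyp4. mink x p = 1}"

text \<open>Inward normal (pointing away from the centre) and outward normal of the horosphere of p at x.\<close>
definition Nin :: "R5 \<Rightarrow> R5 \<Rightarrow> R5" where "Nin p x = x - p"
definition Nout :: "R5 \<Rightarrow> R5 \<Rightarrow> R5" where "Nout p x = p - x"

definition tangent_horo :: "R5 \<Rightarrow> R5 \<Rightarrow> R5 \<Rightarrow> bool" where
  "tangent_horo p x X \<longleftrightarrow> mink X x = 0 \<and> mink X p = 0"

text \<open>Parallel tangent vector field on the horosphere (Levi-Civita connection of the induced
  metric): the ambient derivative along tangent directions has no component tangent to the
  horosphere, i.e. lies in the Minkowski-orthogonal complement span{x, p} of the tangent space.\<close>
definition parallel_on_horo :: "R5 \<Rightarrow> (R5 \<Rightarrow> R5) \<Rightarrow> bool" where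
  "parallel_on_horo p v \<longleftrightarrow>
     (\<forall>x \<in> horo p. \<exists>L. (v has_derivative L) (at x within horo p) \<and>
        (\<forall>X. tangent_horo p x X \<longrightarrow> L X \<in> span {x, p}))"

definition decoration :: "R5 \<Rightarrow> (R5 \<Rightarrow> R5) \<Rightarrow> (R5 \<Rightarrow> R5) \<Rightarrow> bool" where
  "decoration p vi vj \<longleftrightarrow>
     (\<forall>x \<in> horo p. tangent_horo p x (vi x) \<and> tangent_horo p x (vj x) \<and>
        mink (vi x) (vi x) = -1 \<and> mink (vj x) (vj x) = -1 \<and> mink (vi x) (vj x) = 0) \<and>
     parallel_on_horo p vi \<and> parallel_on_horo p vj"

definition mk_frame :: "R5 \<Rightarrow> R5 \<Rightarrow> R5 \<Rightarrow> R5 \<Rightarrow> R5 \<Rightarrow> frame" where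
  "mk_frame x f1 f2 f3 f4 = (\<chi> i. if i = 0 then x else if i = 1 then f1 else if i = 2 then f2
                                    else if i = 3 then f3 else f4)"

text \<open>Oriented orthonormal frames of H^4 (Riemannian metric = - mink on tangent spaces).\<close>
definition frame_bundle :: "frame set" where
  "frame_bundle = {M. M$0 \<in> hyp4 \<and>
      (\<forall>i j. mink (M$i) (M$j) = (if i = j then (if i = 0 then 1 else -1) else 0)) \<and>
      det M > 0}"

text \<open>The spin double cover of the frame bundle: a connected 2-sheeted covering space
  (the universal cover, as the fundamental group of the frame bundle is Z/2).\<close>
definition spin_cover :: "'g::topological_space set \<Rightarrow> ('g \<Rightarrow> frame) \<Rightarrow> bool" where
  "spin_cover Sp proj \<longleftrightarrow> covering_space Sp proj frame_bundle \<and> path_connected Sp \<and>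
     (\<forall>M \<in> frame_bundle. card {g \<in> Sp. proj g = M} = 2)"

definition lifts_path :: "'g::topological_space set \<Rightarrow> ('g \<Rightarrow> frame) \<Rightarrow> (real \<Rightarrow> frame)
                           \<Rightarrow> 'g \<Rightarrow> 'g \<Rightarrow> bool" where
  "lifts_path Sp proj F a b \<longleftrightarrow>
     (\<exists>c. continuous_on {0..1} c \<and> c ` {0..1} \<subseteq> Sp \<and> c 0 = a \<and> c 1 = b \<and>
          (\<forall>s \<in> {0..1}. proj (c s) = F s))"

definition rot41 :: "real \<Rightarrow> frame \<Rightarrow> frame" where
  "rot41 al M = mk_frame (M$0) (cos al *\<^sub>R M$1 - sin al *\<^sub>R M$4) (M$2) (M$3)
                         (cos al *\<^sub>R M$4 + sin al *\<^sub>R M$1)"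

text \<open>Rodrigues rotation matrix (right-handed, angle th about unit axis (a,b,c)), entry (j,i).\<close>
definition rodr :: "real \<Rightarrow> real \<Rightarrow> real \<Rightarrow> real \<Rightarrow> nat \<Rightarrow> nat \<Rightarrow> real" where
  "rodr a b c th j i =
     (let u = (\<lambda>k::nat. if k = 1 then a else if k = 2 then b else c);
          K = (\<lambda>j i::nat. if j = 1 \<and> i = 2 then - c else if j = 1 \<and> i = 3 then b
                   else if j = 2 \<and> i = 1 then c else if j = 2 \<and> i = 3 then - a
                   else if j = 3 \<and> i = 1 then - b else if j = 3 \<and> i = 2 then a else 0)
      in (if j = i then cos th else 0) + sin th * K j i + (1 - cos th) * u j * u i)"

text \<open>Rotate frame M by th about the axis with coordinates (a,b,c) w.r.t. (f1,f2,f3),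
  in the 3-plane spanned by f1,f2,f3 (oriented by (f1,f2,f3), as (f1,f2,f3,f4) is positive).\<close>
definition rot_axis :: "real \<Rightarrow> real \<Rightarrow> real \<Rightarrow> real \<Rightarrow> frame \<Rightarrow> frame" where
  "rot_axis a b c th M =
     (let g = (\<lambda>i. rodr a b c th 1 i *\<^sub>R M$1 + rodr a b c th 2 i *\<^sub>R M$2 + rodr a b c th 3 i *\<^sub>R M$3)
      in mk_frame (M$0) (g 1) (g 2) (g 3) (M$4))"

text \<open>Hyperbolic translation by rho along the oriented geodesic from [p] to [q] (p,q lightlike).\<close>
definition boost :: "R5 \<Rightarrow> R5 \<Rightarrow> real \<Rightarrow> R5 \<Rightarrow> R5" where
  "boost p q rho y = y + ((exp (- rho) - 1) * mink y q / mink p q) *\<^sub>R p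
                       + ((exp rho - 1) * mink y p / mink p q) *\<^sub>R q"

definition boost_frame :: "R5 \<Rightarrow> R5 \<Rightarrow> real \<Rightarrow> frame \<Rightarrow> frame" where
  "boost_frame p q rho M = (\<chi> i. boost p q rho (M$i))"

definition geod :: "R5 \<Rightarrow> R5 \<Rightarrow> R5 set" where
  "geod p q = {x \<in> hyp4. \<exists>a b. a > 0 \<and> b > 0 \<and> x = a *\<^sub>R p + b *\<^sub>R q}"

type_synonym 'g sdhoro = "R5 \<times> (R5 \<Rightarrow> R5) \<times> (R5 \<Rightarrow> R5) \<times> (R5 \<Rightarrow> 'g) \<times> (R5 \<Rightarrow> 'g)"
  \<comment> \<open>(p, v^i, v^j, W^out, W^in)\<close>

definition spin_dec_horo :: "'g::topological_space set \<Rightarrow> ('g \<Rightarrow> frame) \<Rightarrow> 'g sdhoro \<Rightarrow> bool" where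
  "spin_dec_horo Sp proj D \<longleftrightarrow>
     (case D of (p, vi, vj, Wo, Wi) \<Rightarrow>
        future_lightlike p \<and> decoration p vi vj \<and>
        continuous_on (horo p) Wo \<and> Wo ` horo p \<subseteq> Sp \<and>
        continuous_on (horo p) Wi \<and> Wi ` horo p \<subseteq> Sp \<and>
        (\<forall>x \<in> horo p.
           (\<exists>f1. mk_frame x f1 (vi x) (vj x) (Nout p x) \<in> frame_bundle \<and>
                 proj (Wo x) = mk_frame x f1 (vi x) (vj x) (Nout p x)) \<and>
           (\<exists>f1. mk_frame x f1 (vi x) (vj x) (Nin p x) \<in> frame_bundle \<and>
                 proj (Wi x) = mk_frame x f1 (vi x) (vj x) (Nin p x)) \<and>
           lifts_path Sp proj (\<lambda>s. rot41 (s * pi) (proj (Wo x))) (Wo x) (Wi x)))"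

definition lambda_length :: "'g::topological_space set \<Rightarrow> ('g \<Rightarrow> frame) \<Rightarrow> 'g sdhoro \<Rightarrow> 'g sdhoro
                               \<Rightarrow> quat \<Rightarrow> bool" where
  "lambda_length Sp proj D1 D2 l \<longleftrightarrow>
     (case D1 of (p1, _, _, _, Wi1) \<Rightarrow> case D2 of (p2, _, _, Wo2, _) \<Rightarrow>
       (if (\<exists>c>0. p2 = c *\<^sub>R p1) then l = qzero
        else (\<exists>x1 x2. x1 \<in> geod p1 p2 \<inter> horo p1 \<and> x2 \<in> geod p1 p2 \<inter> horo p2 \<and>
               (\<exists>rho th a b c. a\<^sup>2 + b\<^sup>2 + c\<^sup>2 = 1 \<and>
                  lifts_path Sp proj
                    (\<lambda>s. rot_axis a b c (s * th) (boost_frame p1 p2 (s * rho) (proj (Wi1 x1))))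
                    (Wi1 x1) (Wo2 x2) \<and>
                  l = qexp (qmul (Quat (1/2) 0 0 0)
                        (qadd (Quat rho 0 0 0) (qmul (Quat th 0 0 0) (qmul (Quat a b c 0) (Quat 0 0 0 1)))))))))"

end

theory Submission
  imports Defs
begin



lemma exhaust_5:
  fixes x :: 5
  shows "x = 0 \<or> x = 1 \<or> x = 2 \<or> x = 3 \<or> x = 4"
proof (induct x)
  case (of_int z)
  then have "z = 0 \<or> z = 1 \<or> z = 2 \<or> z = 3 \<or> z = 4" by (simp, linarith)
  then show ?case by (elim disjE) simp_all
qed

lemma UNIV_5: "(UNIV :: 5 set) = {0,1,2,3,4}"
  using exhaust_5 by blast

lemma sum5: "(\<Sum>i\<in>(UNIV::5 set). f i) = f 0 + f 1 + f 2 + f 3 + f 4"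
proof -
  have a: "(0::5) \<notin> {1,2,3,4}" "(1::5) \<notin> {2,3,4}" "(2::5) \<notin> {3,4}" "(3::5) \<notin> {4}" by simp_all
  show ?thesis unfolding UNIV_5
    by (simp only: sum.insert[OF _ a(1)] sum.insert[OF _ a(2)] sum.insert[OF _ a(3)] sum.insert[OF _ a(4)]
         sum.empty finite.emptyI finite.insertI add.assoc add_0_right sum.insert[OF _ empty_iff[THEN iffD1, THEN notI]])
qed

lemma mkf [simp]: "mk_frame x a b c d $ 0 = x" "mk_frame x a b c d $ 1 = a" "mk_frame x a b c d $ 2 = b"
  "mk_frame x a b c d $ 3 = c" "mk_frame x a b c d $ 4 = d"
  by (simp_all add: mk_frame_def)

lemma mink_sym: "mink x y = mink y x" by (simp add: mink_def algebra_simps)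
lemma mink_add [simp]: "mink (x + y) z = mink x z + mink y z" "mink z (x + y) = mink z x + mink z y"
  by (simp_all add: mink_def algebra_simps)
lemma mink_diff [simp]: "mink (x - y) z = mink x z - mink y z" "mink z (x - y) = mink z x - mink z y"
  by (simp_all add: mink_def algebra_simps)
lemma mink_scale [simp]: "mink (c *\<^sub>R x) z = c * mink x z" "mink z (c *\<^sub>R x) = c * mink z x"
  by (simp_all add: mink_def algebra_simps)
lemma mink_neg [simp]: "mink (- x) z = - mink x z" "mink z (- x) = - mink z x"
  by (simp_all add: mink_def algebra_simps)
lemma mink_zero [simp]: "mink 0 z = 0" "mink z 0 = 0"
  by (simp_all add: mink_def algebra_simps)

lemma frame_orth:
  assumes "mk_frame x a b c d \<in> frame_bundle"
  shows "mink x x = 1" "mink a a = -1" "mink b b = -1" "mink c c = -1" "mink d d = -1"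
    "mink x a = 0" "mink x b = 0" "mink x c = 0" "mink x d = 0"
    "mink a b = 0" "mink a c = 0" "mink a d = 0" "mink b c = 0" "mink b d = 0" "mink c d = 0"
    "x \<in> hyp4" "det (mk_frame x a b c d) > 0"
proof -
  have H: "\<And>i j. mink (mk_frame x a b c d $ i) (mk_frame x a b c d $ j) = (if i = j then (if i = 0 then 1 else -1) else 0)"
    using assms unfolding frame_bundle_def by blast
  show "mink x x = 1" "mink a a = -1" "mink b b = -1" "mink c c = -1" "mink d d = -1"
    "mink x a = 0" "mink x b = 0" "mink x c = 0" "mink x d = 0"
    "mink a b = 0" "mink a c = 0" "mink a d = 0" "mink b c = 0" "mink b d = 0" "mink c d = 0"
    using H[of 0 0] H[of 1 1] H[of 2 2] H[of 3 3] H[of 4 4] H[of 0 1] H[of 0 2] H[of 0 3] H[of 0 4]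
      H[of 1 2] H[of 1 3] H[of 1 4] H[of 2 3] H[of 2 4] H[of 3 4] by simp_all
  show "x \<in> hyp4" "det (mk_frame x a b c d) > 0" using assms unfolding frame_bundle_def by auto
qed


lemma mink_zero_all:
  assumes "\<And>i. mink (M $ i) z = 0" and "det M \<noteq> 0"
  shows "z = 0"
proof -
  define w :: R5 where "w = (\<chi> i. if i = 0 then z $ 0 else - z $ i)"
  have w0: "w $ 0 = z $ 0" and wi: "\<And>i. i \<noteq> 0 \<Longrightarrow> w $ i = - z $ i" by (simp_all add: w_def)
  have "M *v w = 0"
  proof -
    have "(M *v w) $ i = mink (M $ i) z" for i
      unfolding matrix_vector_mult_def vec_lambda_beta sum5 mink_def
      by (simp add: w0 wi)
    then show ?thesis using assms(1) by (simp add: vec_eq_iff)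
  qed
  moreover have "invertible M" using assms(2) invertible_det_nz by blast
  then obtain B where "B ** M = mat 1" using invertible_def by blast
  ultimately have "w = 0"
    by (metis matrix_vector_mul_assoc matrix_vector_mul_lid matrix_vector_mult_0_right)
  then have "z $ i = 0" for i
    using w0 wi by (metis neg_equal_0_iff_equal zero_index)
  then show ?thesis by (simp add: vec_eq_iff)
qed

lemma frame_complete:
  assumes "mk_frame x a b c d \<in> frame_bundle"
  shows "y = mink y x *\<^sub>R x - mink y a *\<^sub>R a - mink y b *\<^sub>R b - mink y c *\<^sub>R c - mink y d *\<^sub>R d"
proof -
  note o = frame_orth[OF assms]
  have s: "mink a x = 0" "mink b x = 0" "mink c x = 0" "mink d x = 0" "mink b a = 0" "mink c a = 0"
     "mink d a = 0" "mink c b = 0" "mink d b = 0" "mink d c = 0"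
    using o by (simp_all add: mink_sym)
  have sy: "mink y x = mink x y" "mink y a = mink a y" "mink y b = mink b y" "mink y c = mink c y" "mink y d = mink d y"
    by (simp_all add: mink_sym)
  define z where "z = y - (mink y x *\<^sub>R x - mink y a *\<^sub>R a - mink y b *\<^sub>R b - mink y c *\<^sub>R c - mink y d *\<^sub>R d)"
  have "mink (mk_frame x a b c d $ i) z = 0" for i
  proof -
    consider "i = 0" | "i = 1" | "i = 2" | "i = 3" | "i = 4" using exhaust_5 by blast
    then show ?thesis
      by cases (simp_all add: z_def o s sy)
  qed
  then have "z = 0" using mink_zero_all o(17) by (metis less_irrefl)
  then show ?thesis unfolding z_def by simp
qed



lemma vec5_eqI: "A$0 = B$0 \<Longrightarrow> A$1 = B$1 \<Longrightarrow> A$2 = B$2 \<Longrightarrow> A$3 = B$3 \<Longrightarrow> A$4 = B$4 \<Longrightarrow> (A::'a^5) = B"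
  unfolding vec_eq_iff using exhaust_5 by metis

lemma row_eq: "row i A = A $ i" by (simp add: row_def vec_lambda_eta)

lemma det_row_change:
  fixes A :: "real^'n^'n"
  assumes "y \<in> span {A $ j | j. j \<noteq> i}"
  shows "det (\<chi> k. if k = i then A $ i + y else A $ k) = det A"
  using det_row_span[of y A i] assms unfolding row_eq span_vec_eq by simp

lemma lin4: "c1 *\<^sub>R a + c2 *\<^sub>R b + c3 *\<^sub>R c + c4 *\<^sub>R d \<in> span {a,b,c,d}"
  by (intro span_add span_scale span_base) auto

lemma sub4: assumes "a = A $ i1" "b = A $ i2" "c = A $ i3" "d = A $ i4" "i1 \<noteq> i" "i2 \<noteq> i" "i3 \<noteq> i" "i4 \<noteq> i"
  shows "span {a,b,c,d} \<subseteq> span {A $ j | j. j \<noteq> i}"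
  apply (rule span_mono) using assms by blast

lemma det_mk0: assumes "y \<in> span {a,b,c,d}"
  shows "det (mk_frame (x + y) a b c d) = det (mk_frame x a b c d)"
proof -
  let ?A = "mk_frame x a b c d"
  have "y \<in> span {?A $ j | j. j \<noteq> 0}"
    using assms sub4[of a ?A 1 b 2 c 3 d 4 0] by auto
  then have "det (\<chi> k. if k = 0 then ?A $ 0 + y else ?A $ k) = det ?A" by (rule det_row_change)
  moreover have "(\<chi> k. if k = 0 then ?A $ 0 + y else ?A $ k) = mk_frame (x + y) a b c d"
    by (rule vec5_eqI) simp_all
  ultimately show ?thesis by simp
qed

lemma det_mk1: assumes "y \<in> span {x,b,c,d}"
  shows "det (mk_frame x (a + y) b c d) = det (mk_frame x a b c d)"
proof -
  let ?A = "mk_frame x a b c d"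
  have "y \<in> span {?A $ j | j. j \<noteq> 1}"
    using assms sub4[of x ?A 0 b 2 c 3 d 4 1] by auto
  then have "det (\<chi> k. if k = 1 then ?A $ 1 + y else ?A $ k) = det ?A" by (rule det_row_change)
  moreover have "(\<chi> k. if k = 1 then ?A $ 1 + y else ?A $ k) = mk_frame x (a + y) b c d"
    by (rule vec5_eqI) simp_all
  ultimately show ?thesis by simp
qed

lemma det_mk2: assumes "y \<in> span {x,a,c,d}"
  shows "det (mk_frame x a (b + y) c d) = det (mk_frame x a b c d)"
proof -
  let ?A = "mk_frame x a b c d"
  have "y \<in> span {?A $ j | j. j \<noteq> 2}"
    using assms sub4[of x ?A 0 a 1 c 3 d 4 2] by auto
  then have "det (\<chi> k. if k = 2 then ?A $ 2 + y else ?A $ k) = det ?A" by (rule det_row_change)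
  moreover have "(\<chi> k. if k = 2 then ?A $ 2 + y else ?A $ k) = mk_frame x a (b + y) c d"
    by (rule vec5_eqI) simp_all
  ultimately show ?thesis by simp
qed

lemma det_mk3: assumes "y \<in> span {x,a,b,d}"
  shows "det (mk_frame x a b (c + y) d) = det (mk_frame x a b c d)"
proof -
  let ?A = "mk_frame x a b c d"
  have "y \<in> span {?A $ j | j. j \<noteq> 3}"
    using assms sub4[of x ?A 0 a 1 b 2 d 4 3] by auto
  then have "det (\<chi> k. if k = 3 then ?A $ 3 + y else ?A $ k) = det ?A" by (rule det_row_change)
  moreover have "(\<chi> k. if k = 3 then ?A $ 3 + y else ?A $ k) = mk_frame x a b (c + y) d"
    by (rule vec5_eqI) simp_all
  ultimately show ?thesis by simp
qed

lemma det_mk4: assumes "y \<in> span {x,a,b,c}"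
  shows "det (mk_frame x a b c (d + y)) = det (mk_frame x a b c d)"
proof -
  let ?A = "mk_frame x a b c d"
  have "y \<in> span {?A $ j | j. j \<noteq> 4}"
    using assms sub4[of x ?A 0 a 1 b 2 c 3 4] by auto
  then have "det (\<chi> k. if k = 4 then ?A $ 4 + y else ?A $ k) = det ?A" by (rule det_row_change)
  moreover have "(\<chi> k. if k = 4 then ?A $ 4 + y else ?A $ k) = mk_frame x a b c (d + y)"
    by (rule vec5_eqI) simp_all
  ultimately show ?thesis by simp
qed

lemma det_scale1: "det (mk_frame x (r *\<^sub>R a) b c d) = r * det (mk_frame x a b c d)"
proof -
  let ?A = "mk_frame x a b c d"
  have "det (\<chi> i. if i = 1 then r *s ?A $ i else ?A $ i) = r * det (\<chi> i. if i = 1 then ?A $ i else ?A $ i)"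
    by (rule det_row_mul)
  moreover have "(\<chi> i. if i = 1 then r *s ?A $ i else ?A $ i) = mk_frame x (r *\<^sub>R a) b c d"
    by (rule vec5_eqI) (simp_all add: scalar_mult_eq_scaleR)
  moreover have "(\<chi> i. if i = 1 then ?A $ i else ?A $ i) = ?A" by (simp add: vec_eq_iff)
  ultimately show ?thesis by simp
qed

lemma det_scale4: "det (mk_frame x a b c (r *\<^sub>R d)) = r * det (mk_frame x a b c d)"
proof -
  let ?A = "mk_frame x a b c d"
  have "det (\<chi> i. if i = 4 then r *s ?A $ i else ?A $ i) = r * det (\<chi> i. if i = 4 then ?A $ i else ?A $ i)"
    by (rule det_row_mul)
  moreover have "(\<chi> i. if i = 4 then r *s ?A $ i else ?A $ i) = mk_frame x a b c (r *\<^sub>R d)"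
    by (rule vec5_eqI) (simp_all add: scalar_mult_eq_scaleR)
  moreover have "(\<chi> i. if i = 4 then ?A $ i else ?A $ i) = ?A" by (simp add: vec_eq_iff)
  ultimately show ?thesis by simp
qed



definition hf :: "R5 \<Rightarrow> R5 \<Rightarrow> R5 \<Rightarrow> R5" where "hf p u x = u - mink u x *\<^sub>R p"

lemma det_horo_shift:
  assumes F0: "mk_frame x0 u1 u2 u3 (x0 - p) \<in> frame_bundle"
    and h: "mink x0 p = 1" "mink x p = 1" "mink p p = 0"
  shows "det (mk_frame x (hf p u1 x) (hf p u2 x) (hf p u3 x) (x - p)) = det (mk_frame x0 u1 u2 u3 (x0 - p))"
proof -
  let ?E1 = "hf p u1 x" and ?E2 = "hf p u2 x" and ?E3 = "hf p u3 x"
  have "det (mk_frame x ?E1 ?E2 ?E3 (x - p)) = det (mk_frame x ?E1 ?E2 ?E3 (- p + x))"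
    by (simp add: algebra_simps)
  also have "\<dots> = det (mk_frame x ?E1 ?E2 ?E3 (- p))"
    by (rule det_mk4) (simp add: span_base)
  also have "\<dots> = det (mk_frame x (u1 + mink u1 x *\<^sub>R (-p)) ?E2 ?E3 (- p))"
    by (simp add: hf_def)
  also have "\<dots> = det (mk_frame x u1 ?E2 ?E3 (- p))"
    by (rule det_mk1) (rule span_scale, rule span_base, simp)
  also have "\<dots> = det (mk_frame x u1 (u2 + mink u2 x *\<^sub>R (-p)) ?E3 (- p))"
    by (simp add: hf_def)
  also have "\<dots> = det (mk_frame x u1 u2 ?E3 (- p))"
    by (rule det_mk2) (rule span_scale, rule span_base, simp)
  also have "\<dots> = det (mk_frame x u1 u2 (u3 + mink u3 x *\<^sub>R (-p)) (- p))"
    by (simp add: hf_def)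
  also have "\<dots> = det (mk_frame x u1 u2 u3 (- p))"
    by (rule det_mk3) (rule span_scale, rule span_base, simp)
  also have "\<dots> = det (mk_frame (x0 + (x - x0)) u1 u2 u3 (- p))"
    by simp
  also have "\<dots> = det (mk_frame x0 u1 u2 u3 (- p))"
  proof (rule det_mk0)
    let ?y = "x - x0"
    have "?y = mink ?y x0 *\<^sub>R x0 - mink ?y u1 *\<^sub>R u1 - mink ?y u2 *\<^sub>R u2 - mink ?y u3 *\<^sub>R u3 - mink ?y (x0 - p) *\<^sub>R (x0 - p)"
      by (rule frame_complete[OF F0])
    also have "\<dots> = (- mink ?y u1) *\<^sub>R u1 + (- mink ?y u2) *\<^sub>R u2 + (- mink ?y u3) *\<^sub>R u3 + (- mink ?y x0) *\<^sub>R (- p)"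
      using h by (simp add: algebra_simps mink_sym[of p x])
    also have "\<dots> \<in> span {u1, u2, u3, - p}" by (rule lin4)
    finally show "?y \<in> span {u1, u2, u3, - p}" .
  qed
  also have "\<dots> = det (mk_frame x0 u1 u2 u3 (- p + x0))"
    by (rule det_mk4[symmetric]) (simp add: span_base)
  finally show ?thesis by (simp add: algebra_simps)
qed


lemma horo_basic: "x \<in> horo p \<Longrightarrow> mink x p = 1 \<and> mink x x = 1 \<and> mink p x = 1"
  by (simp add: horo_def hyp4_def mink_sym[of p x])



lemma cs4: "((a1::real)*b1 + a2*b2 + a3*b3 + a4*b4)\<^sup>2 \<le> (a1\<^sup>2 + a2\<^sup>2 + a3\<^sup>2 + a4\<^sup>2) * (b1\<^sup>2 + b2\<^sup>2 + b3\<^sup>2 + b4\<^sup>2)"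
  (is "?l \<le> ?r")
proof -
  have "?r - ?l = (a1*b2 - a2*b1)\<^sup>2 + (a1*b3 - a3*b1)\<^sup>2 + (a1*b4 - a4*b1)\<^sup>2 + (a2*b3 - a3*b2)\<^sup>2
     + (a2*b4 - a4*b2)\<^sup>2 + (a3*b4 - a4*b3)\<^sup>2"
    by (simp add: power2_eq_square algebra_simps)
  moreover have "\<dots> \<ge> 0" by simp
  ultimately show ?thesis by linarith
qed

lemma time_pos:
  assumes fl: "future_lightlike p" and yy: "mink y y = 1" and yp: "mink y p = 1"
  shows "y $ 0 > 0"
proof (rule ccontr)
  assume "\<not> y $ 0 > 0"
  then have y0: "y $ 0 \<le> 0" by simp
  have p0: "p $ 0 > 0" and pp: "mink p p = 0" using fl by (auto simp: future_lightlike_def)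
  define S where "S = y$1*p$1 + y$2*p$2 + y$3*p$3 + y$4*p$4"
  define Y where "Y = (y$1)\<^sup>2 + (y$2)\<^sup>2 + (y$3)\<^sup>2 + (y$4)\<^sup>2"
  define P where "P = (p$1)\<^sup>2 + (p$2)\<^sup>2 + (p$3)\<^sup>2 + (p$4)\<^sup>2"
  have cs: "S\<^sup>2 \<le> Y * P" unfolding S_def Y_def P_def by (rule cs4)
  have Yv: "Y = (y$0)\<^sup>2 - 1" using yy unfolding Y_def mink_def by (simp add: power2_eq_square)
  have Pv: "P = (p$0)\<^sup>2" using pp unfolding P_def mink_def by (simp add: power2_eq_square)
  have Sv: "S = y$0 * p$0 - 1" using yp unfolding S_def mink_def by simp
  have neg: "y$0 * p$0 \<le> 0" using y0 p0 by (simp add: mult_nonpos_nonneg)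
  have "S\<^sup>2 = (y$0 * p$0)\<^sup>2 - 2 * (y$0 * p$0) + 1" unfolding Sv by (simp add: power2_eq_square algebra_simps)
  also have "\<dots> > (y$0 * p$0)\<^sup>2 - (p$0)\<^sup>2" using neg p0 by (simp add: power2_eq_square) (smt (verit) mult_pos_pos)
  also have "(y$0 * p$0)\<^sup>2 - (p$0)\<^sup>2 = Y * P" unfolding Yv Pv by (simp add: power2_eq_square algebra_simps)
  finally show False using cs by simp
qed

lemma perp_p_multiple:
  assumes fl: "future_lightlike p" and D: "\<And>z. mink z p = 0 \<Longrightarrow> mink D z = 0"
  shows "D = (D $ 0 / p $ 0) *\<^sub>R p"
proof -
  have p0: "p $ 0 > 0" using fl by (simp add: future_lightlike_def)
  have comp: "D $ k = (D $ 0 / p $ 0) * p $ k" if k: "k \<noteq> 0" for k :: 5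
  proof -
    define z :: R5 where "z = (p $ k) *\<^sub>R axis 0 1 + (p $ 0) *\<^sub>R axis k 1"
    have zc0: "z $ 0 = p $ k" using k by (simp add: z_def axis_def)
    have zc: "z $ i = (if i = k then p $ 0 else 0)" if "i \<noteq> 0" for i
      using k that by (auto simp: z_def axis_def)
    have "mink z p = 0" using zc exhaust_5[of k] k unfolding mink_def
      by (elim disjE) (simp_all add: zc zc0 algebra_simps)
    then have "mink D z = 0" by (rule D)
    then have "D $ 0 * p $ k - D $ k * p $ 0 = 0" using zc exhaust_5[of k] k unfolding mink_def
      by (elim disjE) (simp_all add: zc zc0 algebra_simps)
    then show ?thesis using p0 by (simp add: field_simps)
  qed
  show ?thesis
    unfolding vec_eq_iff
  proof
    fix k :: 5
    show "D $ k = ((D $ 0 / p $ 0) *\<^sub>R p) $ k"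
      using comp[of k] p0 by (cases "k = 0") auto
  qed
qed


lemma span2_obtain:
  assumes "y \<in> span {a, b :: R5}"
  obtains al be where "y = al *\<^sub>R a + be *\<^sub>R b"
proof -
  from assms obtain k where "y - k *\<^sub>R a \<in> span {b}" unfolding span_insert[of a "{b}"] by blast
  then obtain m where "y - k *\<^sub>R a = m *\<^sub>R b" unfolding span_singleton by blast
  then have "y = k *\<^sub>R a + m *\<^sub>R b" by (simp add: algebra_simps)
  then show ?thesis by (rule that)
qed

lemma mink_blin: "bounded_linear (\<lambda>w. mink w z)"
  unfolding linear_conv_bounded_linear[symmetric]
  by (rule linearI) simp_all

lemma parallel_rel:
  assumes fl: "future_lightlike p" and par: "parallel_on_horo p v"
    and tg: "\<forall>y\<in>horo p. mink (v y) y = 0 \<and> mink (v y) p = 0"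
    and x: "x \<in> horo p" and x': "x' \<in> horo p"
  shows "v x' = hf p (v x) x'"
proof -
  have pp: "mink p p = 0" using fl by (simp add: future_lightlike_def)
  have hx: "mink x p = 1" "mink x x = 1" "mink p x = 1" using horo_basic[OF x] by auto
  have hx': "mink x' p = 1" "mink x' x' = 1" "mink p x' = 1" using horo_basic[OF x'] by auto
  define d where "d = x' - x"
  have dp: "mink d p = 0" "mink p d = 0" using hx hx' by (simp_all add: d_def)
  have dx: "mink d x = mink x d" by (rule mink_sym)
  define g where "g t = x + t *\<^sub>R d - (t * mink x d + t\<^sup>2 / 2 * mink d d) *\<^sub>R p" for t :: real
  have gp: "mink (g t) p = 1" for t using hx dp pp by (simp add: g_def)
  have gg: "mink (g t) (g t) = 1" for t
    using hx dp pp dx by (simp add: g_def algebra_simps power2_eq_square)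
  have gh: "g t \<in> horo p" for t
  proof -
    have "g t $ 0 > 0" by (rule time_pos[OF fl gg gp])
    then show ?thesis using gg gp by (simp add: horo_def hyp4_def)
  qed
  have g0: "g 0 = x" by (simp add: g_def)
  have g1: "g 1 = x'"
  proof -
    have "mink x d = mink x x' - 1" using hx by (simp add: d_def)
    moreover have "mink d d = 2 - 2 * mink x x'" using hx hx' by (simp add: d_def mink_sym[of x' x])
    ultimately have "1 * mink x d + 1\<^sup>2 / 2 * mink d d = 0" by (simp add: field_simps)
    then show ?thesis unfolding g_def by (simp add: d_def)
  qed
  define V where "V t = d - (mink x d + t * mink d d) *\<^sub>R p" for t :: real
  have gd: "(g has_derivative (\<lambda>h. h *\<^sub>R V t)) (at t)" for t
    unfolding g_def V_def
    by (auto intro!: derivative_eq_intros simp: algebra_simps power2_eq_square)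
  have Vt: "tangent_horo p (g t) (V t)" for t
    unfolding tangent_horo_def using hx dp pp dx by (simp add: g_def V_def algebra_simps power2_eq_square)
  have const: "mink (v (g 0)) z = mink (v (g 1)) z" if z: "mink z p = 0" for z
  proof -
    have "\<exists>c. \<forall>t\<in>UNIV. mink (v (g t)) z = c"
    proof (rule has_derivative_zero_constant)
      show "convex (UNIV :: real set)" by simp
      fix t :: real
      obtain L where L: "(v has_derivative L) (at (g t) within horo p)"
        "\<forall>X. tangent_horo p (g t) X \<longrightarrow> L X \<in> span {g t, p}"
        using par gh[of t] unfolding parallel_on_horo_def by blast
      have sub: "g ` UNIV \<subseteq> horo p" using gh by auto
      have chain: "((\<lambda>s. v (g s)) has_derivative (\<lambda>h. L (h *\<^sub>R V t))) (at t)"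
        using diff_chain_within[OF gd[of t] has_derivative_subset[OF L(1) sub]] by (simp add: comp_def)
      have linL: "linear L" using L(1) has_derivative_linear by blast
      have Lsc: "L (h *\<^sub>R V t) = h *\<^sub>R L (V t)" for h using linL by (simp add: linear_scale)
      have d1: "((\<lambda>s. mink (v (g s)) p) has_derivative (\<lambda>h. mink (L (h *\<^sub>R V t)) p)) (at t)"
        by (rule bounded_linear.has_derivative[OF mink_blin chain])
      have "(\<lambda>s. mink (v (g s)) p) = (\<lambda>s. 0)" using tg gh by auto
      then have d2: "((\<lambda>s. mink (v (g s)) p) has_derivative (\<lambda>h. 0)) (at t)" by simp
      have "(\<lambda>h. mink (L (h *\<^sub>R V t)) p) = (\<lambda>h. 0)" by (rule has_derivative_unique[OF d1 d2])
      then have LVp: "mink (L (V t)) p = 0" by (metis scaleR_one)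
      obtain al be where LV: "L (V t) = al *\<^sub>R g t + be *\<^sub>R p"
        using L(2) Vt[of t] span2_obtain by blast
      have "al = 0" using LVp gp[of t] pp by (simp add: LV)
      then have LVz: "mink (L (V t)) z = 0" using z by (simp add: LV mink_sym[of p z])
      have "((\<lambda>s. mink (v (g s)) z) has_derivative (\<lambda>h. mink (L (h *\<^sub>R V t)) z)) (at t)"
        by (rule bounded_linear.has_derivative[OF mink_blin chain])
      moreover have "(\<lambda>h. mink (L (h *\<^sub>R V t)) z) = (\<lambda>h. 0)" by (simp add: Lsc LVz)
      ultimately show "((\<lambda>s. mink (v (g s)) z) has_derivative (\<lambda>h. 0)) (at t within UNIV)" by simp
    qed
    then show ?thesis by auto
  qed
  define D where "D = v x' - v x"
  have "mink D z = 0" if "mink z p = 0" for z using const[OF that] g0 g1 by (simp add: D_def)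
  then have Dc: "D = (D $ 0 / p $ 0) *\<^sub>R p" by (rule perp_p_multiple[OF fl])
  define c where "c = D $ 0 / p $ 0"
  have vx': "v x' = v x + c *\<^sub>R p" using Dc by (simp add: D_def c_def algebra_simps)
  have "mink (v x') x' = 0" using tg x' by blast
  then have "c = - mink (v x) x'" using hx' by (simp add: vx')
  then show ?thesis by (simp add: vx' hf_def)
qed


lemma sq1: assumes "(c::real) * c = 1" "c > 0" shows "c = 1"
proof -
  have "(c - 1) * (c + 1) = 0" using assms(1) by (simp add: algebra_simps)
  then show ?thesis using assms(2) by auto
qed

lemma horo_canon:
  assumes sd: "spin_dec_horo Sp proj (p, vi, vj, Wo, Wi)" and x0: "x0 \<in> horo p"
  obtains u1 u2 u3 where "mink u1 p = 0" "mink u2 p = 0" "mink u3 p = 0"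
    "mink u1 u1 = -1" "mink u2 u2 = -1" "mink u3 u3 = -1" "mink u1 u2 = 0" "mink u1 u3 = 0" "mink u2 u3 = 0"
    "mk_frame x0 u1 u2 u3 (x0 - p) \<in> frame_bundle"
    "\<And>x. x \<in> horo p \<Longrightarrow> proj (Wi x) = mk_frame x (hf p u1 x) (hf p u2 x) (hf p u3 x) (x - p)"
    "\<And>x. x \<in> horo p \<Longrightarrow> proj (Wo x) = mk_frame x (- hf p u1 x) (hf p u2 x) (hf p u3 x) (p - x)"
proof -
  have fl: "future_lightlike p" and dec: "decoration p vi vj"
    and fr: "\<And>x. x \<in> horo p \<Longrightarrow>
           (\<exists>f1. mk_frame x f1 (vi x) (vj x) (Nout p x) \<in> frame_bundle \<and>
                 proj (Wo x) = mk_frame x f1 (vi x) (vj x) (Nout p x)) \<and>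
           (\<exists>f1. mk_frame x f1 (vi x) (vj x) (Nin p x) \<in> frame_bundle \<and>
                 proj (Wi x) = mk_frame x f1 (vi x) (vj x) (Nin p x))"
    using sd unfolding spin_dec_horo_def prod.case by blast+
  have pp: "mink p p = 0" using fl by (simp add: future_lightlike_def)
  have tang: "\<forall>y\<in>horo p. mink (vi y) y = 0 \<and> mink (vi y) p = 0" "\<forall>y\<in>horo p. mink (vj y) y = 0 \<and> mink (vj y) p = 0"
    using dec unfolding decoration_def tangent_horo_def by blast+
  have par: "parallel_on_horo p vi" "parallel_on_horo p vj" using dec unfolding decoration_def by blast+
  obtain u1 where F0: "mk_frame x0 u1 (vi x0) (vj x0) (x0 - p) \<in> frame_bundle"
    and W0: "proj (Wi x0) = mk_frame x0 u1 (vi x0) (vj x0) (x0 - p)"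
    using fr[OF x0] unfolding Nin_def by blast
  define u2 where "u2 = vi x0"
  define u3 where "u3 = vj x0"
  note o0 = frame_orth[OF F0[folded u2_def u3_def]]
  have hx0: "mink x0 p = 1" using horo_basic[OF x0] by simp
  have up: "mink u1 p = 0" "mink u2 p = 0" "mink u3 p = 0"
    using o0 by (simp_all add: mink_sym[of u1 x0] mink_sym[of u2 x0] mink_sym[of u3 x0])
  have uu: "mink u1 u1 = -1" "mink u2 u2 = -1" "mink u3 u3 = -1" "mink u1 u2 = 0" "mink u1 u3 = 0" "mink u2 u3 = 0"
    using o0 by simp_all
  have vix: "vi x = hf p u2 x" "vj x = hf p u3 x" if "x \<in> horo p" for x
    using parallel_rel[OF fl par(1) tang(1) x0 that] parallel_rel[OF fl par(2) tang(2) x0 that]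
    by (simp_all add: u2_def u3_def)
  have pu: "mink p u1 = 0" "mink p u2 = 0" "mink p u3 = 0" using up by (simp_all add: mink_sym[of p u1] mink_sym[of p u2] mink_sym[of p u3])
  have uus: "mink u2 u1 = 0" "mink u3 u1 = 0" "mink u3 u2 = 0" using uu by (simp_all add: mink_sym[of u2 u1] mink_sym[of u3 u1] mink_sym[of u3 u2])
  have inF: "proj (Wi x) = mk_frame x (hf p u1 x) (hf p u2 x) (hf p u3 x) (x - p)
      \<and> mk_frame x (hf p u1 x) (hf p u2 x) (hf p u3 x) (x - p) \<in> frame_bundle" if x: "x \<in> horo p" for x
  proof -
    obtain f where Fx: "mk_frame x f (hf p u2 x) (hf p u3 x) (x - p) \<in> frame_bundle"
      and Wx: "proj (Wi x) = mk_frame x f (hf p u2 x) (hf p u3 x) (x - p)"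
      using fr[OF x] vix[OF x] unfolding Nin_def by auto
    let ?E = "hf p u1 x"
    have hx: "mink x p = 1" "mink p x = 1" using horo_basic[OF x] by auto
    have "?E = mink ?E x *\<^sub>R x - mink ?E f *\<^sub>R f - mink ?E (hf p u2 x) *\<^sub>R (hf p u2 x)
        - mink ?E (hf p u3 x) *\<^sub>R (hf p u3 x) - mink ?E (x - p) *\<^sub>R (x - p)"
      by (rule frame_complete[OF Fx])
    also have "\<dots> = (- mink ?E f) *\<^sub>R f"
      using hx pp up pu uu uus by (simp add: hf_def mink_sym[of u1 x] mink_sym[of u2 x] mink_sym[of u3 x] algebra_simps)
    finally have Ec: "?E = (- mink ?E f) *\<^sub>R f" .
    define c where "c = - mink ?E f"
    have Ec': "?E = c *\<^sub>R f" using Ec c_def by simp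
    have "mink ?E ?E = -1" using hx pp up pu uu by (simp add: hf_def mink_sym[of u1 x])
    moreover have "mink ?E ?E = - (c * c)" using frame_orth(2)[OF Fx] by (simp add: Ec')
    ultimately have cc: "c * c = 1" by simp
    have "det (mk_frame x ?E (hf p u2 x) (hf p u3 x) (x - p)) = det (mk_frame x0 u1 u2 u3 (x0 - p))"
      by (rule det_horo_shift) (use F0 u2_def u3_def hx0 hx pp in auto)
    moreover have "det (mk_frame x ?E (hf p u2 x) (hf p u3 x) (x - p)) = c * det (mk_frame x f (hf p u2 x) (hf p u3 x) (x - p))"
      by (simp add: Ec' det_scale1)
    ultimately have "c > 0" using o0(17) frame_orth(17)[OF Fx] u2_def u3_def
      by (metis zero_less_mult_pos2)
    with cc have "c = 1" by (rule sq1)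
    then have "f = ?E" using Ec' by simp
    then show ?thesis using Fx Wx by simp
  qed
  have outF: "proj (Wo x) = mk_frame x (- hf p u1 x) (hf p u2 x) (hf p u3 x) (p - x)" if x: "x \<in> horo p" for x
  proof -
    obtain g where Gx: "mk_frame x g (hf p u2 x) (hf p u3 x) (p - x) \<in> frame_bundle"
      and Wx: "proj (Wo x) = mk_frame x g (hf p u2 x) (hf p u3 x) (p - x)"
      using fr[OF x] vix[OF x] unfolding Nout_def by auto
    let ?E = "hf p u1 x"
    have Fx: "mk_frame x ?E (hf p u2 x) (hf p u3 x) (x - p) \<in> frame_bundle" using inF[OF x] by simp
    have hx: "mink x p = 1" "mink p x = 1" using horo_basic[OF x] by auto
    note og = frame_orth[OF Gx]
    have gx: "mink g x = 0" "mink g (hf p u2 x) = 0" "mink g (hf p u3 x) = 0" "mink g (x - p) = 0"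
      using og by (simp_all add: mink_sym[of g x])
    have "g = mink g x *\<^sub>R x - mink g ?E *\<^sub>R ?E - mink g (hf p u2 x) *\<^sub>R (hf p u2 x)
        - mink g (hf p u3 x) *\<^sub>R (hf p u3 x) - mink g (x - p) *\<^sub>R (x - p)"
      by (rule frame_complete[OF Fx])
    also have "\<dots> = (- mink g ?E) *\<^sub>R ?E" using gx by simp
    finally have Gc: "g = (- mink g ?E) *\<^sub>R ?E" .
    define d where "d = - mink g ?E"
    have Gc': "g = d *\<^sub>R ?E" using Gc d_def by simp
    have "mink ?E ?E = -1" using hx pp up pu uu by (simp add: hf_def mink_sym[of u1 x])
    then have dd: "d * d = 1" using og(2) by (simp add: Gc')
    have "det (mk_frame x g (hf p u2 x) (hf p u3 x) (p - x))
        = det (mk_frame x (d *\<^sub>R ?E) (hf p u2 x) (hf p u3 x) ((-1) *\<^sub>R (x - p)))"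
      by (simp add: Gc')
    also have "\<dots> = - d * det (mk_frame x ?E (hf p u2 x) (hf p u3 x) (x - p))"
      by (subst det_scale1, subst det_scale4, simp)
    finally have "- d > 0" using og(17) frame_orth(17)[OF Fx] by (metis zero_less_mult_pos2)
    then have "- d = 1" using dd sq1[of "-d"] by simp
    then have "g = - ?E" using Gc' by simp
    then show ?thesis using Wx by simp
  qed
  show ?thesis
    apply (rule that[of u1 u2 u3])
    using up uu F0 u2_def u3_def inF outF by auto
qed



definition S3 :: "(nat \<Rightarrow> real) \<Rightarrow> real" where "S3 f = f 1 + f 2 + f 3"

lemma S3_cong: "(\<And>k. k \<in> {1,2,3} \<Longrightarrow> f k = g k) \<Longrightarrow> S3 f = S3 g"
  by (simp add: S3_def)

definition Rq :: "quat \<Rightarrow> nat \<Rightarrow> nat \<Rightarrow> real" where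
 "Rq q j i = (let w = qre q; x = qi q; y = qj q; z = qk q;
   u = (\<lambda>k::nat. if k = 1 then x else if k = 2 then y else z);
   K = (\<lambda>j i::nat. if j = 1 \<and> i = 2 then - z else if j = 1 \<and> i = 3 then y
                   else if j = 2 \<and> i = 1 then z else if j = 2 \<and> i = 3 then - x
                   else if j = 3 \<and> i = 1 then - y else if j = 3 \<and> i = 2 then x else 0)
   in (if j = i then w^2 - x^2 - y^2 - z^2 else 0) + 2 * w * K j i + 2 * u j * u i)"

definition qconj :: "quat \<Rightarrow> quat" where "qconj q = Quat (qre q) (- qi q) (- qj q) (- qk q)"

lemma Rq_hom:
  assumes "b \<in> {1,2,3}" "a \<in> {1,2,3}"
  shows "S3 (\<lambda>c. Rq p b c * Rq q c a) = Rq (qmul p q) b a"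
  using assms by (cases p, cases q) (auto simp: S3_def Rq_def qmul_def Let_def algebra_simps power2_eq_square)

lemma Rq_conj: "a \<in> {1,2,3} \<Longrightarrow> b \<in> {1,2,3} \<Longrightarrow> Rq q a b = Rq (qconj q) b a"
  by (cases q) (auto simp: Rq_def qconj_def Let_def)

lemma qnorm2_mul: "qnorm2 (qmul p q) = qnorm2 p * qnorm2 q"
  by (cases p, cases q) (simp add: qnorm2_def qmul_def algebra_simps power2_eq_square)

lemma qnorm2_conj: "qnorm2 (qconj p) = qnorm2 p"
  by (simp add: qnorm2_def qconj_def)


definition sg :: "nat \<Rightarrow> real" where "sg i = (if i = 1 then -1 else 1)"

definition phi :: "real \<Rightarrow> quat \<Rightarrow> quat" where
  "phi e s = Quat (e * qre s) (e * qk s) (- (e * qj s)) (e * qi s)"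

lemma final_poly:
  assumes "qnorm2 s2 = 1" "e2 > 0"
  shows "qk (qmul (qmul (phi e1 s1) (qinv (phi e2 s2))) (phi e3 s3))
     = - (e1 * e3 / e2) * qi (qmul (qconj s3) (qmul s2 (qconj s1)))"
proof -
  have n: "qnorm2 (phi e2 s2) = e2 * e2" using assms(1)
    by (simp add: qnorm2_def phi_def power2_eq_square algebra_simps)
       (metis (no_types, lifting) distrib_left mult.assoc mult.commute mult.right_neutral)
  have iv: "qinv (phi e2 s2) = Quat (qre s2 / e2) (- qk s2 / e2) (qj s2 / e2) (- qi s2 / e2)"
    unfolding qinv_def n using assms(2) by (simp add: phi_def field_simps)
  show ?thesis unfolding iv using assms(2)
    by (cases s1, cases s2, cases s3) (simp add: qmul_def qconj_def phi_def field_simps algebra_simps)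
qed

lemma trace_Rq:
  "S3 (\<lambda>a. - sg a * Rq X a a) = 4 * (qi X)\<^sup>2 - qnorm2 X"
  by (simp add: S3_def sg_def Rq_def Let_def qnorm2_def power2_eq_square)

lemma trace_to_quat:
  assumes n1: "qnorm2 s1 = 1" and n2: "qnorm2 s2 = 1" and n3: "qnorm2 s3 = 1"
    and T: "S3 (\<lambda>a. S3 (\<lambda>b. S3 (\<lambda>c. Rq s3 b a * Rq s2 b c * Rq s1 a c * (- sg a)))) = -1"
  shows "qi (qmul (qconj s3) (qmul s2 (qconj s1))) = 0"
proof -
  let ?M = "qmul s2 (qconj s1)"
  let ?X = "qmul (qconj s3) ?M"
  have "S3 (\<lambda>a. S3 (\<lambda>b. S3 (\<lambda>c. Rq s3 b a * Rq s2 b c * Rq s1 a c * (- sg a))))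
      = S3 (\<lambda>a. - sg a * S3 (\<lambda>b. Rq (qconj s3) a b * S3 (\<lambda>c. Rq s2 b c * Rq (qconj s1) c a)))"
  proof (rule S3_cong)
    fix a :: nat assume a: "a \<in> {1,2,3}"
    show "S3 (\<lambda>b. S3 (\<lambda>c. Rq s3 b a * Rq s2 b c * Rq s1 a c * (- sg a)))
      = - sg a * S3 (\<lambda>b. Rq (qconj s3) a b * S3 (\<lambda>c. Rq s2 b c * Rq (qconj s1) c a))"
      using a by (simp add: S3_def Rq_conj[of a _ s1] Rq_conj[of _ a s3] algebra_simps)
  qed
  also have "\<dots> = S3 (\<lambda>a. - sg a * Rq ?X a a)"
  proof (rule S3_cong)
    fix a :: nat assume a: "a \<in> {1,2,3}"
    have "S3 (\<lambda>b. Rq (qconj s3) a b * S3 (\<lambda>c. Rq s2 b c * Rq (qconj s1) c a))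
        = S3 (\<lambda>b. Rq (qconj s3) a b * Rq ?M b a)"
      by (rule S3_cong) (metis Rq_hom a)
    also have "\<dots> = Rq ?X a a" by (rule Rq_hom[OF a a])
    finally show "- sg a * S3 (\<lambda>b. Rq (qconj s3) a b * S3 (\<lambda>c. Rq s2 b c * Rq (qconj s1) c a)) = - sg a * Rq ?X a a"
      by simp
  qed
  also have "\<dots> = 4 * (qi ?X)\<^sup>2 - qnorm2 ?X" by (rule trace_Rq)
  also have "qnorm2 ?X = 1" by (simp add: qnorm2_mul qnorm2_conj n1 n2 n3)
  finally show ?thesis using T by simp
qed


definition lamq :: "real \<Rightarrow> real \<Rightarrow> real \<Rightarrow> real \<Rightarrow> real \<Rightarrow> quat" where
  "lamq rho th a b c = qexp (qmul (Quat (1/2) 0 0 0)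
                        (qadd (Quat rho 0 0 0) (qmul (Quat th 0 0 0) (qmul (Quat a b c 0) (Quat 0 0 0 1)))))"

lemma sinc: "(if \<bar>t\<bar> = 0 then 1 else sin \<bar>t\<bar> / \<bar>t\<bar>) * t = (sin t :: real)"
proof (cases "t = 0")
  case True then show ?thesis by simp
next
  case False
  then show ?thesis by (cases "t \<ge> 0") (simp_all add: abs_if)
qed

lemma lamq_form:
  assumes "a\<^sup>2 + b\<^sup>2 + c\<^sup>2 = 1"
  shows "lamq rho th a b c = phi (exp (rho/2)) (Quat (cos (th/2)) (sin (th/2) * a) (sin (th/2) * b) (sin (th/2) * c))"
proof -
  let ?t = "th / 2"
  have arg: "qmul (Quat (1/2) 0 0 0) (qadd (Quat rho 0 0 0) (qmul (Quat th 0 0 0) (qmul (Quat a b c 0) (Quat 0 0 0 1))))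
     = Quat (rho/2) (?t * c) (- (?t * b)) (?t * a)"
    by (simp add: qmul_def qadd_def)
  have r: "sqrt ((?t * c)\<^sup>2 + (- (?t * b))\<^sup>2 + (?t * a)\<^sup>2) = \<bar>?t\<bar>"
  proof -
    have "(?t * c)\<^sup>2 + (- (?t * b))\<^sup>2 + (?t * a)\<^sup>2 = ?t\<^sup>2 * (a\<^sup>2 + b\<^sup>2 + c\<^sup>2)"
      by (simp add: power2_eq_square algebra_simps)
    then show ?thesis using assms by simp
  qed
  define sc where "sc = (if \<bar>?t\<bar> = 0 then 1 else sin \<bar>?t\<bar> / \<bar>?t\<bar>)"
  have scv: "sc * ?t = sin ?t" unfolding sc_def by (rule sinc)
  have "lamq rho th a b c = Quat (exp (rho/2) * cos \<bar>?t\<bar>) (exp (rho/2) * sc * (?t * c))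
      (exp (rho/2) * sc * (- (?t * b))) (exp (rho/2) * sc * (?t * a))"
    unfolding lamq_def arg qexp_def Let_def quat.sel r sc_def by simp
  also have "\<dots> = phi (exp (rho/2)) (Quat (cos (th/2)) (sin (th/2) * a) (sin (th/2) * b) (sin (th/2) * c))"
  proof -
    have "\<bar>th\<bar> / 2 = \<bar>th / 2\<bar>" by simp
    then have "cos (\<bar>th\<bar> / 2) = cos (th / 2)" by (metis cos_abs_real)
    then show ?thesis unfolding phi_def quat.sel
      by (simp add: scv[symmetric] algebra_simps)
  qed
  finally show ?thesis .
qed

lemma rodr_Rq:
  assumes "a\<^sup>2 + b\<^sup>2 + c\<^sup>2 = 1" "j \<in> {1,2,3}" "i \<in> {1,2,3}"
  shows "rodr a b c th j i = Rq (Quat (cos (th/2)) (sin (th/2) * a) (sin (th/2) * b) (sin (th/2) * c)) j i"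
proof -
  let ?C = "cos (th/2)" and ?S = "sin (th/2)"
  have th: "th = 2 * (th/2)" by simp
  have cs: "?C\<^sup>2 + ?S\<^sup>2 = 1" by simp
  have c1: "cos th = ?C\<^sup>2 - ?S\<^sup>2" by (subst th, rule cos_double)
  have s1: "sin th = 2 * ?S * ?C" by (subst th, rule sin_double)
  have c2: "1 - cos th = 2 * ?S\<^sup>2" using c1 cs by linarith
  have d: "?C\<^sup>2 - (?S * a)\<^sup>2 - (?S * b)\<^sup>2 - (?S * c)\<^sup>2 = ?C\<^sup>2 - ?S\<^sup>2"
  proof -
    have "(?S * a)\<^sup>2 + (?S * b)\<^sup>2 + (?S * c)\<^sup>2 = ?S\<^sup>2 * (a\<^sup>2 + b\<^sup>2 + c\<^sup>2)" by (simp add: power2_eq_square algebra_simps)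
    then show ?thesis using assms(1) by simp
  qed
  have cc: "?C * ?C = 1 - ?S * ?S" using cs unfolding power2_eq_square by linarith
  have aa: "a * a = 1 - b * b - c * c" using assms(1) by (simp add: power2_eq_square)
  have abc2: "a * (a * (?S * ?S)) + (b * (b * (?S * ?S)) + c * (c * (?S * ?S))) = ?S * ?S"
  proof -
    have "a * (a * (?S * ?S)) + (b * (b * (?S * ?S)) + c * (c * (?S * ?S))) = (?S * ?S) * (a\<^sup>2 + b\<^sup>2 + c\<^sup>2)"
      by (simp add: power2_eq_square algebra_simps)
    then show ?thesis using assms(1) by simp
  qed
  show ?thesis
    using assms(2,3) unfolding rodr_def Rq_def Let_def quat.sel
    apply (auto simp: c1 s1 c2 d power2_eq_square algebra_simps)
    apply (simp_all add: cc aa algebra_simps)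
    apply (simp_all add: abc2)
    done
qed


lemma norm_s: "a\<^sup>2 + b\<^sup>2 + c\<^sup>2 = 1 \<Longrightarrow>
  qnorm2 (Quat (cos (th/2)) (sin (th/2) * a) (sin (th/2) * b) (sin (th/2) * c)) = 1"
proof -
  assume h: "a\<^sup>2 + b\<^sup>2 + c\<^sup>2 = 1"
  have "qnorm2 (Quat (cos (th/2)) (sin (th/2) * a) (sin (th/2) * b) (sin (th/2) * c))
     = (cos (th/2))\<^sup>2 + (sin (th/2))\<^sup>2 * (a\<^sup>2 + b\<^sup>2 + c\<^sup>2)"
    by (simp add: qnorm2_def power2_eq_square algebra_simps)
  then show ?thesis using h by simp
qed

lemma quat_main:
  assumes n1: "a1\<^sup>2 + b1\<^sup>2 + c1\<^sup>2 = 1" and n2: "a2\<^sup>2 + b2\<^sup>2 + c2\<^sup>2 = 1" and n3: "a3\<^sup>2 + b3\<^sup>2 + c3\<^sup>2 = 1"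
    and T: "S3 (\<lambda>a. S3 (\<lambda>b. S3 (\<lambda>c. rodr a3 b3 c3 t3 b a * rodr a2 b2 c2 t2 b c * rodr a1 b1 c1 t1 a c * (- sg a)))) = -1"
  shows "qk (qmul (qmul (lamq r1 t1 a1 b1 c1) (qinv (lamq r2 t2 a2 b2 c2))) (lamq r3 t3 a3 b3 c3)) = 0"
proof -
  define s1 where "s1 = Quat (cos (t1/2)) (sin (t1/2) * a1) (sin (t1/2) * b1) (sin (t1/2) * c1)"
  define s2 where "s2 = Quat (cos (t2/2)) (sin (t2/2) * a2) (sin (t2/2) * b2) (sin (t2/2) * c2)"
  define s3 where "s3 = Quat (cos (t3/2)) (sin (t3/2) * a3) (sin (t3/2) * b3) (sin (t3/2) * c3)"
  have N: "qnorm2 s1 = 1" "qnorm2 s2 = 1" "qnorm2 s3 = 1"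
    unfolding s1_def s2_def s3_def using norm_s n1 n2 n3 by blast+
  have "S3 (\<lambda>a. S3 (\<lambda>b. S3 (\<lambda>c. Rq s3 b a * Rq s2 b c * Rq s1 a c * (- sg a))))
     = S3 (\<lambda>a. S3 (\<lambda>b. S3 (\<lambda>c. rodr a3 b3 c3 t3 b a * rodr a2 b2 c2 t2 b c * rodr a1 b1 c1 t1 a c * (- sg a))))"
    apply (rule S3_cong)+
    apply (simp only: s1_def s2_def s3_def rodr_Rq[OF n1] rodr_Rq[OF n2] rodr_Rq[OF n3])
    done
  then have "qi (qmul (qconj s3) (qmul s2 (qconj s1))) = 0"
    using trace_to_quat[OF N(1) N(2) N(3)] T by simp
  moreover have "qk (qmul (qmul (lamq r1 t1 a1 b1 c1) (qinv (lamq r2 t2 a2 b2 c2))) (lamq r3 t3 a3 b3 c3))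
     = - (exp (r1/2) * exp (r3/2) / exp (r2/2)) * qi (qmul (qconj s3) (qmul s2 (qconj s1)))"
    unfolding lamq_form[OF n1] lamq_form[OF n2] lamq_form[OF n3] s1_def[symmetric] s2_def[symmetric] s3_def[symmetric]
    by (rule final_poly[OF N(2)]) simp
  ultimately show ?thesis by simp
qed





definition Bf :: "R5 \<Rightarrow> R5 \<Rightarrow> R5 \<Rightarrow> R5 \<Rightarrow> real" where
  "Bf pm pn v u = mink v u - mink v pm * mink u pn / mink pm pn"

definition compl :: "R5 \<Rightarrow> (nat \<Rightarrow> R5) \<Rightarrow> bool" where
  "compl p U \<longleftrightarrow> (\<forall>X Y. mink X p = 0 \<longrightarrow> mink Y p = 0 \<longrightarrow> S3 (\<lambda>k. mink (U k) X * mink (U k) Y) = - mink X Y)"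

lemma S3_mult: "S3 (\<lambda>k. c * f k) = c * S3 f" by (simp add: S3_def algebra_simps)

lemma key4:
  assumes y: "mink y p1 = 0" "mink y y = -1"
    and pp: "mink p1 p1 = 0" "mink p2 p2 = 0" "mink p3 p3 = 0"
    and m: "mink p1 p2 = m12" "mink p2 p1 = m12" "mink p1 p3 = m13" "mink p3 p1 = m13" "mink p2 p3 = m23" "mink p3 p2 = m23"
    and nz: "m12 \<noteq> 0" "m13 \<noteq> 0" "m23 \<noteq> 0"
  defines "Y \<equiv> y - (mink y p2 / m12) *\<^sub>R p1"
  defines "W \<equiv> Y - (mink Y p3 / m23) *\<^sub>R p2"
  defines "Z \<equiv> y - (mink y p3 / m13) *\<^sub>R p1"
  shows "mink Z W = -1 + (m12 * m13 / m23) * (mink y p2 / m12 - mink y p3 / m13)\<^sup>2"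
proof -
  have s: "mink p1 y = 0" "mink p2 y = mink y p2" "mink p3 y = mink y p3" using y(1) by (simp_all add: mink_sym[of _ y])
  show ?thesis unfolding W_def Y_def Z_def
    by (simp add: s y pp m nz field_simps power2_eq_square)
qed


lemma sg_sq: "sg c * sg c = 1" by (simp add: sg_def)

lemma trace_id:
  assumes pp: "mink p1 p1 = 0" "mink p2 p2 = 0" "mink p3 p3 = 0"
    and m: "mink p1 p2 = m12" "mink p2 p1 = m12" "mink p1 p3 = m13" "mink p3 p1 = m13" "mink p2 p3 = m23" "mink p3 p2 = m23"
    and nz: "m12 \<noteq> 0" "m13 \<noteq> 0" "m23 \<noteq> 0"
    and U1p: "\<And>k. mink (U1 k) p1 = 0" and U2p: "\<And>k. mink (U2 k) p2 = 0" and U3p: "\<And>k. mink (U3 k) p3 = 0"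
    and U1n: "\<And>k. k \<in> {1,2,3} \<Longrightarrow> mink (U1 k) (U1 k) = -1"
    and c1: "compl p1 U1" and c2: "compl p2 U2" and c3: "compl p3 U3"
  shows "S3 (\<lambda>a. S3 (\<lambda>b. S3 (\<lambda>c.
      (- sg a * Bf p3 p1 (U1 a) (U3 b)) * (- sg c * Bf p3 p2 (U2 c) (U3 b))
      * (- sg c * Bf p1 p2 (U2 c) (U1 a)) * (- sg a)))) = -1"
proof -
  define X where "X b = U3 b - (mink (U3 b) p2 / m23) *\<^sub>R p3" for b
  define Y where "Y a = U1 a - (mink (U1 a) p2 / m12) *\<^sub>R p1" for a
  define Z where "Z a = U1 a - (mink (U1 a) p3 / m13) *\<^sub>R p1" for a
  define W where "W a = Y a - (mink (Y a) p3 / m23) *\<^sub>R p2" for a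
  have Xp: "mink (X b) p2 = 0" for b using nz by (simp add: X_def m)
  have Yp: "mink (Y a) p2 = 0" for a using nz by (simp add: Y_def m)
  have Zp: "mink (Z a) p3 = 0" for a using nz by (simp add: Z_def m)
  have Wp: "mink (W a) p3 = 0" for a using nz by (simp add: W_def m)
  have B1: "Bf p3 p2 (U2 c) (U3 b) = mink (U2 c) (X b)" for b c
    by (simp add: Bf_def X_def m mink_sym[of p3 "U2 c"])
  have C1: "Bf p1 p2 (U2 c) (U1 a) = mink (U2 c) (Y a)" for a c
    by (simp add: Bf_def Y_def m mink_sym[of p1 "U2 c"])
  have A1: "Bf p3 p1 (U1 a) (U3 b) = mink (U3 b) (Z a)" for a b
    by (simp add: Bf_def Z_def m mink_sym[of "U1 a" "U3 b"] mink_sym[of "U3 b" p1])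
  have XY: "mink (X b) (Y a) = mink (U3 b) (W a)" for a b
    by (simp add: X_def W_def m mink_sym[of p3 "Y a"] algebra_simps)
  have step1: "S3 (\<lambda>c. (- sg c * Bf p3 p2 (U2 c) (U3 b)) * (- sg c * Bf p1 p2 (U2 c) (U1 a)))
      = - mink (X b) (Y a)" for a b
  proof -
    have "S3 (\<lambda>c. (- sg c * Bf p3 p2 (U2 c) (U3 b)) * (- sg c * Bf p1 p2 (U2 c) (U1 a)))
       = S3 (\<lambda>c. mink (U2 c) (X b) * mink (U2 c) (Y a))"
      unfolding B1 C1 by (rule S3_cong) (simp add: sg_def)
    also have "\<dots> = - mink (X b) (Y a)" using c2 Xp Yp unfolding compl_def by blast
    finally show ?thesis .
  qed
  have step2: "S3 (\<lambda>b. S3 (\<lambda>c.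
      (- sg a * Bf p3 p1 (U1 a) (U3 b)) * (- sg c * Bf p3 p2 (U2 c) (U3 b))
      * (- sg c * Bf p1 p2 (U2 c) (U1 a)) * (- sg a))) = mink (Z a) (W a)" for a
  proof -
    have "S3 (\<lambda>b. S3 (\<lambda>c.
      (- sg a * Bf p3 p1 (U1 a) (U3 b)) * (- sg c * Bf p3 p2 (U2 c) (U3 b))
      * (- sg c * Bf p1 p2 (U2 c) (U1 a)) * (- sg a)))
      = S3 (\<lambda>b. (- 1) * (mink (U3 b) (Z a) * mink (U3 b) (W a)))"
    proof (rule S3_cong)
      fix b
      have "S3 (\<lambda>c. (- sg a * Bf p3 p1 (U1 a) (U3 b)) * (- sg c * Bf p3 p2 (U2 c) (U3 b))
        * (- sg c * Bf p1 p2 (U2 c) (U1 a)) * (- sg a))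
        = (sg a * sg a) * Bf p3 p1 (U1 a) (U3 b) * S3 (\<lambda>c. (- sg c * Bf p3 p2 (U2 c) (U3 b)) * (- sg c * Bf p1 p2 (U2 c) (U1 a)))"
        by (simp add: S3_def algebra_simps)
      also have "\<dots> = (- 1) * (mink (U3 b) (Z a) * mink (U3 b) (W a))"
        unfolding step1 sg_sq A1 XY by simp
      finally show "S3 (\<lambda>c. (- sg a * Bf p3 p1 (U1 a) (U3 b)) * (- sg c * Bf p3 p2 (U2 c) (U3 b))
        * (- sg c * Bf p1 p2 (U2 c) (U1 a)) * (- sg a)) = (- 1) * (mink (U3 b) (Z a) * mink (U3 b) (W a))" .
    qed
    also have "\<dots> = - S3 (\<lambda>b. mink (U3 b) (Z a) * mink (U3 b) (W a))"
      by (simp add: S3_def)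
    also have "\<dots> = mink (Z a) (W a)" using c3 Zp Wp unfolding compl_def by simp
    finally show ?thesis .
  qed
  define w where "w = (1 / m12) *\<^sub>R p2 - (1 / m13) *\<^sub>R p3"
  have wp: "mink w p1 = 0" using nz by (simp add: w_def m)
  have ww: "mink w w = - 2 * m23 / (m12 * m13)" using nz by (simp add: w_def m pp field_simps)
  have step3: "mink (Z a) (W a) = -1 + (m12 * m13 / m23) * (mink (U1 a) w * mink (U1 a) w)" if "a \<in> {1,2,3}" for a
  proof -
    have "mink (Z a) (W a) = -1 + (m12 * m13 / m23) * (mink (U1 a) p2 / m12 - mink (U1 a) p3 / m13)\<^sup>2"
      unfolding Z_def W_def Y_def by (rule key4[OF U1p U1n[OF that] pp m nz])
    moreover have "mink (U1 a) w = mink (U1 a) p2 / m12 - mink (U1 a) p3 / m13" by (simp add: w_def)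
    ultimately show ?thesis by (simp add: power2_eq_square)
  qed
  have "S3 (\<lambda>a. S3 (\<lambda>b. S3 (\<lambda>c.
      (- sg a * Bf p3 p1 (U1 a) (U3 b)) * (- sg c * Bf p3 p2 (U2 c) (U3 b))
      * (- sg c * Bf p1 p2 (U2 c) (U1 a)) * (- sg a))))
     = S3 (\<lambda>a. -1 + (m12 * m13 / m23) * (mink (U1 a) w * mink (U1 a) w))"
    unfolding step2 by (rule S3_cong) (rule step3)
  also have "\<dots> = -3 + (m12 * m13 / m23) * S3 (\<lambda>a. mink (U1 a) w * mink (U1 a) w)"
    by (simp add: S3_def algebra_simps)
  also have "S3 (\<lambda>a. mink (U1 a) w * mink (U1 a) w) = - mink w w" using c1 wp unfolding compl_def by blast
  finally show ?thesis using nz by (simp add: ww field_simps)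
qed



definition tri :: "'a \<Rightarrow> 'a \<Rightarrow> 'a \<Rightarrow> nat \<Rightarrow> 'a" where
  "tri a b c k = (if k = 1 then a else if k = 2 then b else c)"

lemma pair_rel:
  assumes inm: "\<And>x. x \<in> horo pm \<Longrightarrow> proj (Wim x) = mk_frame x (hf pm u1 x) (hf pm u2 x) (hf pm u3 x) (x - pm)"
    and outn: "\<And>x. x \<in> horo pn \<Longrightarrow> proj (Won x) = mk_frame x (- hf pn v1 x) (hf pn v2 x) (hf pn v3 x) (pn - x)"
    and up: "mink u1 pm = 0" "mink u2 pm = 0" "mink u3 pm = 0"
    and uu: "mink u1 u1 = -1" "mink u2 u2 = -1" "mink u3 u3 = -1" "mink u1 u2 = 0" "mink u1 u3 = 0" "mink u2 u3 = 0"
    and vp: "mink v1 pn = 0" "mink v2 pn = 0" "mink v3 pn = 0"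
    and pp: "mink pm pm = 0" "mink pn pn = 0"
    and ll: "lambda_length Sp proj (pm, vim, vjm, Wom, Wim) (pn, vin, vjn, Won, Win) l"
    and nz: "\<not> (\<exists>c>0. pn = c *\<^sub>R pm)"
  shows "\<exists>rho th a b c. a\<^sup>2 + b\<^sup>2 + c\<^sup>2 = 1 \<and> l = lamq rho th a b c \<and>
     (\<forall>k\<in>{1,2,3}. \<forall>i\<in>{1,2,3}. rodr a b c th k i = - sg i * Bf pm pn (tri v1 v2 v3 i) (tri u1 u2 u3 k))"
proof -
  obtain x1 x2 rho th a b c where x1: "x1 \<in> geod pm pn \<inter> horo pm" and x2: "x2 \<in> geod pm pn \<inter> horo pn"
    and abc: "a\<^sup>2 + b\<^sup>2 + c\<^sup>2 = 1"
    and lp: "lifts_path Sp proj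
                    (\<lambda>s. rot_axis a b c (s * th) (boost_frame pm pn (s * rho) (proj (Wim x1))))
                    (Wim x1) (Won x2)"
    and lv: "l = lamq rho th a b c"
    using ll nz unfolding lambda_length_def prod.case lamq_def by (simp only: if_False) blast
  have "proj (Won x2) = rot_axis a b c th (boost_frame pm pn rho (proj (Wim x1)))"
    using lp unfolding lifts_path_def by force
  then have EQ: "mk_frame x2 (- hf pn v1 x2) (hf pn v2 x2) (hf pn v3 x2) (pn - x2) =
       rot_axis a b c th (boost_frame pm pn rho (mk_frame x1 (hf pm u1 x1) (hf pm u2 x1) (hf pm u3 x1) (x1 - pm)))"
    using inm outn x1 x2 by simp
  obtain al be where x1e: "x1 = al *\<^sub>R pm + be *\<^sub>R pn" using x1 unfolding geod_def by blast
  obtain al' be' where x2e: "x2 = al' *\<^sub>R pm + be' *\<^sub>R pn" using x2 unfolding geod_def by blast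
  let ?mu = "mink pm pn"
  have pnm: "mink pn pm = ?mu" by (rule mink_sym)
  have h1: "be * ?mu = 1" using x1 horo_basic[of x1 pm] pp pnm by (simp add: x1e)
  have h2: "al' * ?mu = 1" using x2 horo_basic[of x2 pn] pp by (simp add: x2e)
  have mu0: "?mu \<noteq> 0" using h1 by auto
  define E where "E k = hf pm (tri u1 u2 u3 k) x1" for k
  define V where "V i = hf pn (tri v1 v2 v3 i) x2" for i
  have tp: "mink (tri u1 u2 u3 k) pm = 0" "mink pm (tri u1 u2 u3 k) = 0" for k
    using up by (simp_all add: tri_def mink_sym[of pm u1] mink_sym[of pm u2] mink_sym[of pm u3])
  have tv: "mink (tri v1 v2 v3 k) pn = 0" "mink pn (tri v1 v2 v3 k) = 0" for k
    using vp by (simp_all add: tri_def mink_sym[of pn v1] mink_sym[of pn v2] mink_sym[of pn v3])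
  have ux1: "mink (tri u1 u2 u3 k) x1 = be * mink (tri u1 u2 u3 k) pn" for k
    by (simp add: x1e tp)
  have vx2: "mink (tri v1 v2 v3 k) x2 = al' * mink (tri v1 v2 v3 k) pm" for k
    by (simp add: x2e tv)
  have Ek: "mink (E k) pm = 0" "mink (E k) pn = 0" for k
  proof -
    show "mink (E k) pm = 0" by (simp add: E_def hf_def tp pp)
    have "mink (E k) pn = mink (tri u1 u2 u3 k) pn * (1 - be * ?mu)"
      by (simp add: E_def hf_def ux1 algebra_simps)
    then show "mink (E k) pn = 0" using h1 by simp
  qed
  have EE: "mink (E j) (E k) = (if j = k then -1 else 0)" if "j \<in> {1,2,3}" "k \<in> {1,2,3}" for j k
  proof -
    have "mink (E j) (E k) = mink (tri u1 u2 u3 j) (tri u1 u2 u3 k)"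
      by (simp add: E_def hf_def tp pp)
    also have "\<dots> = (if j = k then -1 else 0)"
      using that uu by (auto simp: tri_def mink_sym[of u2 u1] mink_sym[of u3 u1] mink_sym[of u3 u2])
    finally show ?thesis .
  qed
  have bE: "boost pm pn rho (E k) = E k" for k
    using Ek[of k] by (simp add: boost_def)
  have BF: "boost_frame pm pn rho (mk_frame x1 (hf pm u1 x1) (hf pm u2 x1) (hf pm u3 x1) (x1 - pm))
     = mk_frame (boost pm pn rho x1) (E 1) (E 2) (E 3) (boost pm pn rho (x1 - pm))"
  proof -
    have "boost pm pn rho (hf pm u1 x1) = hf pm u1 x1" "boost pm pn rho (hf pm u2 x1) = hf pm u2 x1"
      "boost pm pn rho (hf pm u3 x1) = hf pm u3 x1"
      using bE[of 1] bE[of 2] bE[of 3] by (simp_all add: E_def tri_def)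
    then show ?thesis by (intro vec5_eqI) (simp_all add: boost_frame_def E_def tri_def)
  qed
  have EQ2: "mk_frame x2 (- V 1) (V 2) (V 3) (pn - x2) = mk_frame (boost pm pn rho x1)
      (rodr a b c th 1 1 *\<^sub>R E 1 + rodr a b c th 2 1 *\<^sub>R E 2 + rodr a b c th 3 1 *\<^sub>R E 3)
      (rodr a b c th 1 2 *\<^sub>R E 1 + rodr a b c th 2 2 *\<^sub>R E 2 + rodr a b c th 3 2 *\<^sub>R E 3)
      (rodr a b c th 1 3 *\<^sub>R E 1 + rodr a b c th 2 3 *\<^sub>R E 2 + rodr a b c th 3 3 *\<^sub>R E 3)
      (boost pm pn rho (x1 - pm))"
    using EQ unfolding BF by (simp add: rot_axis_def Let_def V_def tri_def)
  have rows: "sg i *\<^sub>R V i = rodr a b c th 1 i *\<^sub>R E 1 + rodr a b c th 2 i *\<^sub>R E 2 + rodr a b c th 3 i *\<^sub>R E 3"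
    if "i \<in> {1,2,3}" for i
  proof -
    have "i = 1 \<or> i = 2 \<or> i = 3" using that by auto
    then show ?thesis
    proof (elim disjE)
      assume "i = 1" then show ?thesis using arg_cong[OF EQ2, of "\<lambda>M. M $ 1"] by (simp add: sg_def)
    next
      assume "i = 2" then show ?thesis using arg_cong[OF EQ2, of "\<lambda>M. M $ 2"] by (simp add: sg_def)
    next
      assume "i = 3" then show ?thesis using arg_cong[OF EQ2, of "\<lambda>M. M $ 3"] by (simp add: sg_def)
    qed
  qed
  have VE: "mink (V i) (E k) = Bf pm pn (tri v1 v2 v3 i) (tri u1 u2 u3 k)" for i k
  proof -
    have al': "al' = 1 / ?mu" and be: "be = 1 / ?mu" using h1 h2 mu0 by (simp_all add: field_simps)
    have s1: "mink pn (tri u1 u2 u3 k) = mink (tri u1 u2 u3 k) pn" by (rule mink_sym)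
    show ?thesis
      unfolding V_def E_def hf_def Bf_def
      by (simp add: ux1 vx2 tv tp s1 pnm al' be field_simps mu0)
  qed
  have "rodr a b c th k i = - sg i * Bf pm pn (tri v1 v2 v3 i) (tri u1 u2 u3 k)"
    if "k \<in> {1,2,3}" "i \<in> {1,2,3}" for k i
  proof -
    have "mink (sg i *\<^sub>R V i) (E k) = - rodr a b c th k i"
      using that unfolding rows[OF that(2)] by (auto simp: EE)
    then show ?thesis using VE[of i k] by simp
  qed
  then show ?thesis using abc lv by blast
qed




lemma ll_points:
  assumes ll: "lambda_length Sp proj (pm, vim, vjm, Wom, Wim) (pn, vin, vjn, Won, Win) l"
    and nz: "\<not> (\<exists>c>0. pn = c *\<^sub>R pm)" and pp: "mink pm pm = 0"
  shows "\<exists>x1 x2. x1 \<in> horo pm \<and> x2 \<in> horo pn" and "mink pm pn \<noteq> 0"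
proof -
  obtain x1 x2 where x1: "x1 \<in> geod pm pn \<inter> horo pm" and x2: "x2 \<in> geod pm pn \<inter> horo pn"
    using ll nz unfolding lambda_length_def prod.case by (simp only: if_False) blast
  then show "\<exists>x1 x2. x1 \<in> horo pm \<and> x2 \<in> horo pn" by blast
  obtain al be where x1e: "x1 = al *\<^sub>R pm + be *\<^sub>R pn" using x1 unfolding geod_def by blast
  have "be * mink pm pn = 1" using x1 horo_basic[of x1 pm] pp mink_sym[of pn pm] by (simp add: x1e)
  then show "mink pm pn \<noteq> 0" by auto
qed

lemma ll_zero:
  assumes ll: "lambda_length Sp proj (pm, vim, vjm, Wom, Wim) (pn, vin, vjn, Won, Win) l"
    and "\<exists>c>0. pn = c *\<^sub>R pm"
  shows "l = qzero"
  using assms unfolding lambda_length_def prod.case by simp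

lemma compl_frame:
  assumes F0: "mk_frame x0 u1 u2 u3 (x0 - p) \<in> frame_bundle"
  shows "compl p (tri u1 u2 u3)"
  unfolding compl_def
proof (intro allI impI)
  fix X Y assume X: "mink X p = 0" and Y: "mink Y p = 0"
  have "mink X Y = mink (mink X x0 *\<^sub>R x0 - mink X u1 *\<^sub>R u1 - mink X u2 *\<^sub>R u2 - mink X u3 *\<^sub>R u3 - mink X (x0 - p) *\<^sub>R (x0 - p)) Y"
    by (subst frame_complete[OF F0, of X]) (rule refl)
  also have "\<dots> = - (mink X u1 * mink u1 Y + mink X u2 * mink u2 Y + mink X u3 * mink u3 Y)"
    using X Y by (simp add: algebra_simps mink_sym[of p Y])
  finally show "S3 (\<lambda>k. mink (tri u1 u2 u3 k) X * mink (tri u1 u2 u3 k) Y) = - mink X Y"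
    by (simp add: S3_def tri_def mink_sym[of u1 X] mink_sym[of u2 X] mink_sym[of u3 X] mink_sym[of u1 Y] mink_sym[of u2 Y] mink_sym[of u3 Y])
qed


lemma qzero_mul: "qmul qzero x = qzero" "qmul x qzero = qzero"
  by (simp_all add: qmul_def qzero_def)

theorem proposition1p8:
  fixes Sp :: "'g::topological_space set" and proj :: "'g \<Rightarrow> frame"
    and D1 D2 D3 :: "'g sdhoro" and l12 l32 l31 :: quat
  assumes "spin_cover Sp proj"
    and "spin_dec_horo Sp proj D1" and "spin_dec_horo Sp proj D2" and "spin_dec_horo Sp proj D3"
    and "lambda_length Sp proj D1 D2 l12"
    and "lambda_length Sp proj D3 D2 l32"
    and "lambda_length Sp proj D3 D1 l31"
    and "l32 \<noteq> qzero"
  shows "qmul (qmul l12 (qinv l32)) l31 \<in> qV"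
proof (cases "l12 = qzero \<or> l31 = qzero")
  case True
  then have "qmul (qmul l12 (qinv l32)) l31 = qzero" by (auto simp: qzero_mul)
  then show ?thesis by (simp add: qV_def qzero_def)
next
  case False
  obtain p1 vi1 vj1 Wo1 Wi1 where D1: "D1 = (p1, vi1, vj1, Wo1, Wi1)" by (cases D1) blast
  obtain p2 vi2 vj2 Wo2 Wi2 where D2: "D2 = (p2, vi2, vj2, Wo2, Wi2)" by (cases D2) blast
  obtain p3 vi3 vj3 Wo3 Wi3 where D3: "D3 = (p3, vi3, vj3, Wo3, Wi3)" by (cases D3) blast
  note sd1 = assms(2)[unfolded D1] and sd2 = assms(3)[unfolded D2] and sd3 = assms(4)[unfolded D3]
  note L12 = assms(5)[unfolded D1 D2] and L32 = assms(6)[unfolded D3 D2] and L31 = assms(7)[unfolded D3 D1]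
  have fl: "future_lightlike p1" "future_lightlike p2" "future_lightlike p3"
    using sd1 sd2 sd3 unfolding spin_dec_horo_def prod.case by blast+
  have pp: "mink p1 p1 = 0" "mink p2 p2 = 0" "mink p3 p3 = 0" using fl by (simp_all add: future_lightlike_def)
  have nz12: "\<not> (\<exists>c>0. p2 = c *\<^sub>R p1)" using ll_zero[OF L12] False by blast
  have nz32: "\<not> (\<exists>c>0. p2 = c *\<^sub>R p3)" using ll_zero[OF L32] assms(8) by blast
  have nz31: "\<not> (\<exists>c>0. p1 = c *\<^sub>R p3)" using ll_zero[OF L31] False by blast
  obtain x1 x2 where x1: "x1 \<in> horo p1" and x2: "x2 \<in> horo p2" using ll_points(1)[OF L12 nz12 pp(1)] by blast
  obtain x3 x2' where x3: "x3 \<in> horo p3" using ll_points(1)[OF L32 nz32 pp(3)] by blast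
  have m12: "mink p1 p2 \<noteq> 0" using ll_points(2)[OF L12 nz12 pp(1)] .
  have m32: "mink p3 p2 \<noteq> 0" using ll_points(2)[OF L32 nz32 pp(3)] .
  have m31: "mink p3 p1 \<noteq> 0" using ll_points(2)[OF L31 nz31 pp(3)] .
  obtain u11 u12 u13 where C1: "mink u11 p1 = 0" "mink u12 p1 = 0" "mink u13 p1 = 0"
    "mink u11 u11 = -1" "mink u12 u12 = -1" "mink u13 u13 = -1" "mink u11 u12 = 0" "mink u11 u13 = 0" "mink u12 u13 = 0"
    "mk_frame x1 u11 u12 u13 (x1 - p1) \<in> frame_bundle"
    "\<And>x. x \<in> horo p1 \<Longrightarrow> proj (Wi1 x) = mk_frame x (hf p1 u11 x) (hf p1 u12 x) (hf p1 u13 x) (x - p1)"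
    "\<And>x. x \<in> horo p1 \<Longrightarrow> proj (Wo1 x) = mk_frame x (- hf p1 u11 x) (hf p1 u12 x) (hf p1 u13 x) (p1 - x)"
    by (rule horo_canon[OF sd1 x1]) (rule that, assumption+)
  obtain u21 u22 u23 where C2: "mink u21 p2 = 0" "mink u22 p2 = 0" "mink u23 p2 = 0"
    "mink u21 u21 = -1" "mink u22 u22 = -1" "mink u23 u23 = -1" "mink u21 u22 = 0" "mink u21 u23 = 0" "mink u22 u23 = 0"
    "mk_frame x2 u21 u22 u23 (x2 - p2) \<in> frame_bundle"
    "\<And>x. x \<in> horo p2 \<Longrightarrow> proj (Wi2 x) = mk_frame x (hf p2 u21 x) (hf p2 u22 x) (hf p2 u23 x) (x - p2)"
    "\<And>x. x \<in> horo p2 \<Longrightarrow> proj (Wo2 x) = mk_frame x (- hf p2 u21 x) (hf p2 u22 x) (hf p2 u23 x) (p2 - x)"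
    by (rule horo_canon[OF sd2 x2]) (rule that, assumption+)
  obtain u31 u32 u33 where C3: "mink u31 p3 = 0" "mink u32 p3 = 0" "mink u33 p3 = 0"
    "mink u31 u31 = -1" "mink u32 u32 = -1" "mink u33 u33 = -1" "mink u31 u32 = 0" "mink u31 u33 = 0" "mink u32 u33 = 0"
    "mk_frame x3 u31 u32 u33 (x3 - p3) \<in> frame_bundle"
    "\<And>x. x \<in> horo p3 \<Longrightarrow> proj (Wi3 x) = mk_frame x (hf p3 u31 x) (hf p3 u32 x) (hf p3 u33 x) (x - p3)"
    "\<And>x. x \<in> horo p3 \<Longrightarrow> proj (Wo3 x) = mk_frame x (- hf p3 u31 x) (hf p3 u32 x) (hf p3 u33 x) (p3 - x)"
    by (rule horo_canon[OF sd3 x3]) (rule that, assumption+)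
  obtain r1 t1 a1 b1 c1 where P12: "a1\<^sup>2 + b1\<^sup>2 + c1\<^sup>2 = 1" "l12 = lamq r1 t1 a1 b1 c1"
    "\<forall>k\<in>{1,2,3}. \<forall>i\<in>{1,2,3}. rodr a1 b1 c1 t1 k i = - sg i * Bf p1 p2 (tri u21 u22 u23 i) (tri u11 u12 u13 k)"
    using pair_rel[OF C1(11) C2(12) C1(1-9) C2(1-3) pp(1,2) L12 nz12] by blast
  obtain r2 t2 a2 b2 c2 where P32: "a2\<^sup>2 + b2\<^sup>2 + c2\<^sup>2 = 1" "l32 = lamq r2 t2 a2 b2 c2"
    "\<forall>k\<in>{1,2,3}. \<forall>i\<in>{1,2,3}. rodr a2 b2 c2 t2 k i = - sg i * Bf p3 p2 (tri u21 u22 u23 i) (tri u31 u32 u33 k)"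
    using pair_rel[OF C3(11) C2(12) C3(1-9) C2(1-3) pp(3,2) L32 nz32] by blast
  obtain r3 t3 a3 b3 c3 where P31: "a3\<^sup>2 + b3\<^sup>2 + c3\<^sup>2 = 1" "l31 = lamq r3 t3 a3 b3 c3"
    "\<forall>k\<in>{1,2,3}. \<forall>i\<in>{1,2,3}. rodr a3 b3 c3 t3 k i = - sg i * Bf p3 p1 (tri u11 u12 u13 i) (tri u31 u32 u33 k)"
    using pair_rel[OF C3(11) C1(12) C3(1-9) C1(1-3) pp(3,1) L31 nz31] by blast
  let ?U1 = "tri u11 u12 u13" and ?U2 = "tri u21 u22 u23" and ?U3 = "tri u31 u32 u33"
  have T0: "S3 (\<lambda>a. S3 (\<lambda>b. S3 (\<lambda>c.
      (- sg a * Bf p3 p1 (?U1 a) (?U3 b)) * (- sg c * Bf p3 p2 (?U2 c) (?U3 b))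
      * (- sg c * Bf p1 p2 (?U2 c) (?U1 a)) * (- sg a)))) = -1"
  proof (rule trace_id[OF pp refl mink_sym refl mink_sym refl mink_sym])
    show "mink p1 p2 \<noteq> 0" "mink p1 p3 \<noteq> 0" "mink p2 p3 \<noteq> 0"
      using m12 m31 m32 by (simp_all add: mink_sym[of p1 p3] mink_sym[of p2 p3])
    show "\<And>k. mink (?U1 k) p1 = 0" "\<And>k. mink (?U2 k) p2 = 0" "\<And>k. mink (?U3 k) p3 = 0"
      using C1(1-3) C2(1-3) C3(1-3) by (simp_all add: tri_def)
    show "\<And>k. k \<in> {1,2,3} \<Longrightarrow> mink (?U1 k) (?U1 k) = -1" using C1(4-6) by (auto simp: tri_def)
    show "compl p1 ?U1" "compl p2 ?U2" "compl p3 ?U3"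
      using compl_frame C1(10) C2(10) C3(10) by blast+
  qed
  have T: "S3 (\<lambda>a. S3 (\<lambda>b. S3 (\<lambda>c. rodr a3 b3 c3 t3 b a * rodr a2 b2 c2 t2 b c * rodr a1 b1 c1 t1 a c * (- sg a)))) = -1"
  proof -
    have R12: "\<And>k i. k \<in> {1,2,3} \<Longrightarrow> i \<in> {1,2,3} \<Longrightarrow> rodr a1 b1 c1 t1 k i = - sg i * Bf p1 p2 (?U2 i) (?U1 k)"
      using P12(3) by blast
    have R32: "\<And>k i. k \<in> {1,2,3} \<Longrightarrow> i \<in> {1,2,3} \<Longrightarrow> rodr a2 b2 c2 t2 k i = - sg i * Bf p3 p2 (?U2 i) (?U3 k)"
      using P32(3) by blast
    have R31: "\<And>k i. k \<in> {1,2,3} \<Longrightarrow> i \<in> {1,2,3} \<Longrightarrow> rodr a3 b3 c3 t3 k i = - sg i * Bf p3 p1 (?U1 i) (?U3 k)"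
      using P31(3) by blast
    show ?thesis
      unfolding T0[symmetric]
      apply (rule S3_cong)+
      apply (simp only: R12 R32 R31)
      done
  qed
  have "qk (qmul (qmul l12 (qinv l32)) l31) = 0"
    unfolding P12(2) P32(2) P31(2) by (rule quat_main[OF P12(1) P32(1) P31(1) T])
  then show ?thesis by (simp add: qV_def)
qed


end
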